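(* Every nonempty, acyclic and connected extended representation graph for $E$ that does not contain a source is isomorphic to $(F_x,\phi_x)$ for some $x\in X^\infty$.
   Context: $E=(E^0,E^1,s,r)$ is a row-finite directed graph; for each vertex $v$ emitting an edge a fixed edge $e^v\in s^{-1}(v)$ is called special, others nonspecial. The double graph $E_d$ has vertices $E^0$ and edges $e$ (real) and $e^*$ (ghost) for $e\in E^1$, with $s_d(e)=s(e),r_d(e)=r(e),s_d(e^* )=r(e),r_d(e^* )=s(e)$. For a path $p=e_1\dots e_n$ set $p^*=e_n^*\dots e_1^*$. The set $X$ of (finite) basis paths consists of the paths in $E_d$: vertices; $p,p^*$ for paths $p$ of length $\ge1$ in $E$; $pq^*$ with $p=e_1\dots e_k,q=f_1\dots f_n$ of length $\ge1$ in $E$, $r(p)=r(q)$, and $e_k\ne f_n$ or $e_k=f_n$ nonspecial. $X^\infty$ is the set of left-infinite words $x=\dots x_3x_2x_1$ of edges of $E_d$ such that each $x_n\dots x_1$ is a basis path. An extended representation graph for $E$ is a pair $(F,\phi)$, $F$ a directed graph, $\phi:F\to E_d$ a graph homomorphism, such that for every $w\in F^0$: (i) $w$ is a source or receives exactly one edge $f_w$; (ii) if $w$ is a source or $\phi(f_w)$ is a nonspecial real edge, $\phi$ maps $s^{-1}(w)$ bijectively onto $s_d^{-1}(\phi(w))$; (iii) if $\phi(f_w)$ is a special real edge, onto $s_d^{-1}(\phi(w))\setminus\{\phi(f_w)^*\}$; (iv) if $\phi(f_w)$ is a ghost edge, onto the ghost edges in $s_d^{-1}(\phi(w))$. An isomorphism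 $(F,\phi)\to(G,\psi)$ is a graph isomorphism $\alpha$ with $\psi\circ\alpha=\phi$. $F$ is connected if any two vertices are joined by a path when edge directions are ignored; acyclic if it has no cycle; nonempty if $F^0\neq\emptyset$. $(F_x,\phi_x)$ for $x=\dots x_2x_1\in X^\infty$: for $i\in\mathbb N$, $X_i$ = basis paths $y=y_1\dots y_n$, $n\ge1$, with $x_iy_1$ a basis path and $y_1\ne x_{i-1}$ if $i\ge2$. Vertices $w_i$ ($i\in\mathbb N$), $w_{i,y}$ ($y\in X_i$), all distinct; edges $f_i$ from $w_{i+1}$ to $w_i$, and $f_{i,y}$ to $w_{i,y}$ from $w_i$ if $|y|=1$, from $w_{i,y_1\dots y_{n-1}}$ if $n\ge2$; $\phi_x(w_i)=r_d(x_i)$, $\phi_x(w_{i,y})=r_d(y)$, $\phi_x(f_i)=x_i$, $\phi_x(f_{i,y})=$ last edge of $y$. *)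

theory Defs
  imports Main
begin

record ('v,'e) dgraph =
  verts :: "'v set"
  edges :: "'e set"
  src   :: "'e \<Rightarrow> 'v"
  rng   :: "'e \<Rightarrow> 'v"

definition wf_graph :: "('v,'e) dgraph \<Rightarrow> bool" where
  "wf_graph G \<longleftrightarrow> (\<forall>e\<in>edges G. src G e \<in> verts G \<and> rng G e \<in> verts G)"

definition row_finite_graph :: "('v,'e) dgraph \<Rightarrow> bool" where
  "row_finite_graph G \<longleftrightarrow> wf_graph G \<and>
     (\<forall>v\<in>verts G. finite {e\<in>edges G. src G e = v})"

definition special_choice :: "('v,'e) dgraph \<Rightarrow> ('v \<Rightarrow> 'e) \<Rightarrow> bool" where
  "special_choice G sp \<longleftrightarrow>
     (\<forall>v\<in>verts G. (\<exists>e\<in>edges G. src G e = v) \<longrightarrow> sp v \<in> edges G \<and> src G (sp v) = v)"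

definition special :: "('v,'e) dgraph \<Rightarrow> ('v \<Rightarrow> 'e) \<Rightarrow> 'e \<Rightarrow> bool" where
  "special G sp e \<longleftrightarrow> sp (src G e) = e"

datatype 'e dedge = Real 'e | Ghost 'e

fun is_ghost :: "'e dedge \<Rightarrow> bool" where
  "is_ghost (Real e) = False" | "is_ghost (Ghost e) = True"

definition double_graph :: "('v,'e) dgraph \<Rightarrow> ('v, 'e dedge) dgraph" where
  "double_graph G = \<lparr> verts = verts G,
     edges = Real ` edges G \<union> Ghost ` edges G,
     src = (\<lambda>d. case d of Real e \<Rightarrow> src G e | Ghost e \<Rightarrow> rng G e),
     rng = (\<lambda>d. case d of Real e \<Rightarrow> rng G e | Ghost e \<Rightarrow> src G e) \<rparr>"

definition is_path :: "('v,'e) dgraph \<Rightarrow> 'e list \<Rightarrow> bool" where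
  "is_path G p \<longleftrightarrow> p \<noteq> [] \<and> set p \<subseteq> edges G \<and>
     (\<forall>i. Suc i < length p \<longrightarrow> rng G (p ! i) = src G (p ! Suc i))"

definition ghost_path :: "'e list \<Rightarrow> 'e dedge list" where
  "ghost_path p = rev (map Ghost p)"

text \<open>Basis paths of length \<ge> 1 (vertices, the basis paths of length 0,
  are never needed below).\<close>
definition basis_path :: "('v,'e) dgraph \<Rightarrow> ('v \<Rightarrow> 'e) \<Rightarrow> 'e dedge list \<Rightarrow> bool" where
  "basis_path G sp w \<longleftrightarrow>
     (\<exists>p. is_path G p \<and> w = map Real p) \<or>
     (\<exists>p. is_path G p \<and> w = ghost_path p) \<or>
     (\<exists>p q. is_path G p \<and> is_path G q \<and> rng G (last p) = rng G (last q) \<and>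
        (last p \<noteq> last q \<or> \<not> special G sp (last p)) \<and>
        w = map Real p @ ghost_path q)"

text \<open>Left-infinite words x = ... x_3 x_2 x_1 are functions on the indices
  1,2,3,...; the value at index 0 is irrelevant.\<close>
definition Xinf :: "('v,'e) dgraph \<Rightarrow> ('v \<Rightarrow> 'e) \<Rightarrow> (nat \<Rightarrow> 'e dedge) set" where
  "Xinf G sp = {x. \<forall>n\<ge>1. basis_path G sp (rev (map x [1..<Suc n]))}"

definition graph_hom :: "('a,'b) dgraph \<Rightarrow> ('c,'d) dgraph \<Rightarrow> ('a \<Rightarrow> 'c) \<Rightarrow> ('b \<Rightarrow> 'd) \<Rightarrow> bool" where
  "graph_hom F G \<phi>v \<phi>e \<longleftrightarrow>
     (\<forall>w\<in>verts F. \<phi>v w \<in> verts G) \<and>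
     (\<forall>f\<in>edges F. \<phi>e f \<in> edges G \<and> src G (\<phi>e f) = \<phi>v (src F f) \<and> rng G (\<phi>e f) = \<phi>v (rng F f))"

definition is_source :: "('a,'b) dgraph \<Rightarrow> 'a \<Rightarrow> bool" where
  "is_source F w \<longleftrightarrow> \<not> (\<exists>f\<in>edges F. rng F f = w)"

definition in_edge :: "('a,'b) dgraph \<Rightarrow> 'a \<Rightarrow> 'b" where
  "in_edge F w = (THE f. f \<in> edges F \<and> rng F f = w)"

definition ext_rep_graph ::
  "('v,'e) dgraph \<Rightarrow> ('v \<Rightarrow> 'e) \<Rightarrow> ('a,'b) dgraph \<Rightarrow> ('a \<Rightarrow> 'v) \<Rightarrow> ('b \<Rightarrow> 'e dedge) \<Rightarrow> bool" where
  "ext_rep_graph G sp F \<phi>v \<phi>e \<longleftrightarrow>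
     wf_graph F \<and> graph_hom F (double_graph G) \<phi>v \<phi>e \<and>
     (\<forall>w\<in>verts F.
        (is_source F w \<or> (\<exists>!f. f \<in> edges F \<and> rng F f = w)) \<and>
        (let out = {f\<in>edges F. src F f = w};
             dout = {d\<in>edges (double_graph G). src (double_graph G) d = \<phi>v w} in
         (if is_source F w then bij_betw \<phi>e out dout
          else (case \<phi>e (in_edge F w) of
                  Real e \<Rightarrow> (if special G sp e then bij_betw \<phi>e out (dout - {Ghost e})
                             else bij_betw \<phi>e out dout)
                | Ghost e \<Rightarrow> bij_betw \<phi>e out {d\<in>dout. is_ghost d}))))"

definition edge_rel :: "('a,'b) dgraph \<Rightarrow> ('a \<times> 'a) set" where
  "edge_rel F = {(src F f, rng F f) | f. f \<in> edges F}"

definition connected_graph :: "('a,'b) dgraph \<Rightarrow> bool" where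
  "connected_graph F \<longleftrightarrow>
     (\<forall>u\<in>verts F. \<forall>v\<in>verts F. (u, v) \<in> (edge_rel F \<union> (edge_rel F)\<inverse>)\<^sup>*)"

definition acyclic_graph :: "('a,'b) dgraph \<Rightarrow> bool" where
  "acyclic_graph F \<longleftrightarrow> acyclic (edge_rel F)"

definition rep_iso ::
  "('a,'b) dgraph \<Rightarrow> ('a \<Rightarrow> 'v) \<Rightarrow> ('b \<Rightarrow> 'd) \<Rightarrow>
   ('c,'g) dgraph \<Rightarrow> ('c \<Rightarrow> 'v) \<Rightarrow> ('g \<Rightarrow> 'd) \<Rightarrow> bool" where
  "rep_iso F \<phi>v \<phi>e H \<psi>v \<psi>e \<longleftrightarrow>
     (\<exists>\<alpha>v \<alpha>e. bij_betw \<alpha>v (verts F) (verts H) \<and> bij_betw \<alpha>e (edges F) (edges H) \<and>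
        (\<forall>f\<in>edges F. src H (\<alpha>e f) = \<alpha>v (src F f) \<and> rng H (\<alpha>e f) = \<alpha>v (rng F f)) \<and>
        (\<forall>w\<in>verts F. \<psi>v (\<alpha>v w) = \<phi>v w) \<and>
        (\<forall>f\<in>edges F. \<psi>e (\<alpha>e f) = \<phi>e f))"

datatype 'e fx_vert = W nat | WY nat "'e dedge list"
datatype 'e fx_edge = FE nat | FEY nat "'e dedge list"

definition Xi :: "('v,'e) dgraph \<Rightarrow> ('v \<Rightarrow> 'e) \<Rightarrow> (nat \<Rightarrow> 'e dedge) \<Rightarrow> nat \<Rightarrow> 'e dedge list set" where
  "Xi G sp x i = {y. y \<noteq> [] \<and> basis_path G sp y \<and> basis_path G sp [x i, hd y] \<and>
                      (i \<ge> 2 \<longrightarrow> hd y \<noteq> x (i - 1))}"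

definition Fx :: "('v,'e) dgraph \<Rightarrow> ('v \<Rightarrow> 'e) \<Rightarrow> (nat \<Rightarrow> 'e dedge) \<Rightarrow> ('e fx_vert, 'e fx_edge) dgraph" where
  "Fx G sp x = \<lparr>
     verts = {W i | i. i \<ge> 1} \<union> {WY i y | i y. i \<ge> 1 \<and> y \<in> Xi G sp x i},
     edges = {FE i | i. i \<ge> 1} \<union> {FEY i y | i y. i \<ge> 1 \<and> y \<in> Xi G sp x i},
     src = (\<lambda>f. case f of FE i \<Rightarrow> W (Suc i)
                | FEY i y \<Rightarrow> (if length y = 1 then W i else WY i (butlast y))),
     rng = (\<lambda>f. case f of FE i \<Rightarrow> W i | FEY i y \<Rightarrow> WY i y) \<rparr>"

definition phiVx :: "('v,'e) dgraph \<Rightarrow> (nat \<Rightarrow> 'e dedge) \<Rightarrow> 'e fx_vert \<Rightarrow> 'v" where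
  "phiVx G x w = (case w of W i \<Rightarrow> rng (double_graph G) (x i)
                  | WY i y \<Rightarrow> rng (double_graph G) (last y))"

definition phiEx :: "(nat \<Rightarrow> 'e dedge) \<Rightarrow> 'e fx_edge \<Rightarrow> 'e dedge" where
  "phiEx x f = (case f of FE i \<Rightarrow> x i | FEY i y \<Rightarrow> last y)"

end

theory Submission
  imports Defs
begin


definition okpair :: "('v,'e) dgraph \<Rightarrow> ('v \<Rightarrow> 'e) \<Rightarrow> 'e dedge \<Rightarrow> 'e dedge \<Rightarrow> bool" where
  "okpair E sp a b \<longleftrightarrow> rng (double_graph E) a = src (double_graph E) b \<and>
     \<not> (is_ghost a \<and> \<not> is_ghost b) \<and> (\<forall>e. a = Real e \<and> b = Ghost e \<longrightarrow> \<not> special E sp e)"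

fun good :: "('v,'e) dgraph \<Rightarrow> ('v \<Rightarrow> 'e) \<Rightarrow> 'e dedge list \<Rightarrow> bool" where
  "good E sp [] = False"
| "good E sp [a] = (a \<in> edges (double_graph E))"
| "good E sp (a # b # w) = (a \<in> edges (double_graph E) \<and> okpair E sp a b \<and> good E sp (b # w))"

lemma dg_simps[simp]:
  "verts (double_graph E) = verts E"
  "src (double_graph E) (Real e) = src E e"
  "src (double_graph E) (Ghost e) = rng E e"
  "rng (double_graph E) (Real e) = rng E e"
  "rng (double_graph E) (Ghost e) = src E e"
  by (simp_all add: double_graph_def)

lemma dg_edges: "edges (double_graph E) = Real ` edges E \<union> Ghost ` edges E"
  by (simp add: double_graph_def)

lemma Real_in_dg[simp]: "Real e \<in> edges (double_graph E) \<longleftrightarrow> e \<in> edges E"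
  by (auto simp: dg_edges)
lemma Ghost_in_dg[simp]: "Ghost e \<in> edges (double_graph E) \<longleftrightarrow> e \<in> edges E"
  by (auto simp: dg_edges)

lemma good_Cons: "w \<noteq> [] \<Longrightarrow> good E sp (a # w) \<longleftrightarrow>
   a \<in> edges (double_graph E) \<and> okpair E sp a (hd w) \<and> good E sp w"
  by (cases w) auto

lemma good_ne: "good E sp w \<Longrightarrow> w \<noteq> []" by auto

lemma good_hd: "good E sp w \<Longrightarrow> hd w \<in> edges (double_graph E)"
  by (induction E sp w rule: good.induct) auto

lemma good_append: "good E sp w1 \<Longrightarrow> good E sp w2 \<Longrightarrow> okpair E sp (last w1) (hd w2) \<Longrightarrow> good E sp (w1 @ w2)"
proof (induction w1)
  case Nil then show ?case by simp
next
  case (Cons a w1)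
  show ?case
  proof (cases "w1 = []")
    case True
    then show ?thesis using Cons.prems by (cases w2) auto
  next
    case False
    then show ?thesis using Cons by (auto simp: good_Cons)
  qed
qed

lemma good_snoc: "w \<noteq> [] \<Longrightarrow> good E sp (w @ [a]) \<longleftrightarrow>
   good E sp w \<and> a \<in> edges (double_graph E) \<and> okpair E sp (last w) a"
proof (induction w)
  case Nil then show ?case by simp
next
  case (Cons b w)
  show ?case
  proof (cases "w = []")
    case True then show ?thesis by auto
  next
    case False then show ?thesis using Cons by (auto simp: good_Cons)
  qed
qed

lemma is_path_Cons: "is_path G (e # p) \<longleftrightarrow> e \<in> edges G \<and> (p = [] \<or> (rng G e = src G (hd p) \<and> is_path G p))"
proof
  assume a: "is_path G (e # p)"
  show "e \<in> edges G \<and> (p = [] \<or> (rng G e = src G (hd p) \<and> is_path G p))"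
  proof (cases p)
    case Nil then show ?thesis using a by (simp add: is_path_def)
  next
    case (Cons f q)
    have 1: "rng G e = src G (hd p)" using a Cons unfolding is_path_def
      by (metis length_Cons list.sel(1) nth_Cons_0 nth_Cons_Suc zero_less_Suc Suc_less_eq)
    have 2: "is_path G p" using a Cons unfolding is_path_def
      by (metis Suc_less_eq length_Cons list.distinct(1) list.set_intros(2) nth_Cons_Suc set_subset_Cons subset_code(1)
          subset_trans)
    show ?thesis using a 1 2 by (simp add: is_path_def)
  qed
next
  assume a: "e \<in> edges G \<and> (p = [] \<or> (rng G e = src G (hd p) \<and> is_path G p))"
  show "is_path G (e # p)"
    unfolding is_path_def
  proof (intro conjI allI impI)
    show "set (e # p) \<subseteq> edges G" using a by (auto simp: is_path_def)
    fix i assume i: "Suc i < length (e # p)"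
    show "rng G ((e # p) ! i) = src G ((e # p) ! Suc i)"
    proof (cases i)
      case 0 then show ?thesis using a i by (cases p) auto
    next
      case (Suc j) then show ?thesis using a i by (auto simp: is_path_def)
    qed
  qed simp
qed

lemma is_path_snoc: "is_path G (p @ [e]) \<longleftrightarrow> e \<in> edges G \<and> (p = [] \<or> (is_path G p \<and> rng G (last p) = src G e))"
proof (induction p)
  case Nil then show ?case by (simp add: is_path_Cons)
next
  case (Cons a p)
  show ?case
    using Cons by (cases p) (auto simp: is_path_Cons)
qed

lemma ghost_path_snoc: "ghost_path (q @ [e]) = Ghost e # ghost_path q"
  by (simp add: ghost_path_def)

lemma hd_ghost_path: "q \<noteq> [] \<Longrightarrow> hd (ghost_path q) = Ghost (last q)"
  by (simp add: ghost_path_def hd_rev last_map)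

lemma ghost_path_ne: "q \<noteq> [] \<Longrightarrow> ghost_path q \<noteq> []"
  by (simp add: ghost_path_def)

lemma good_real: "is_path E p \<Longrightarrow> good E sp (map Real p)"
proof (induction p)
  case Nil then show ?case by (simp add: is_path_def)
next
  case (Cons e p)
  then show ?case by (cases p) (auto simp: is_path_Cons okpair_def)
qed

lemma good_ghost: "is_path E q \<Longrightarrow> good E sp (ghost_path q)"
proof (induction q rule: rev_induct)
  case Nil then show ?case by (simp add: is_path_def)
next
  case (snoc e q)
  show ?case
  proof (cases "q = []")
    case True then show ?thesis using snoc by (simp add: ghost_path_def is_path_def)
  next
    case False
    then show ?thesis using snoc
      by (auto simp: is_path_snoc ghost_path_snoc good_Cons hd_ghost_path ghost_path_ne okpair_def)
  qed
qed

lemma basis_cases: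
  assumes "basis_path E sp w"
  obtains (R) p where "is_path E p" "w = map Real p"
  | (G) p where "is_path E p" "w = ghost_path p"
  | (M) p q where "is_path E p" "is_path E q" "rng E (last p) = rng E (last q)"
    "last p \<noteq> last q \<or> \<not> special E sp (last p)" "w = map Real p @ ghost_path q"
  using assms unfolding basis_path_def by blast

lemma basis_good: "basis_path E sp w \<Longrightarrow> good E sp w"
proof (elim basis_cases)
  fix p assume "is_path E p" "w = map Real p" then show ?thesis by (simp add: good_real)
next
  fix p assume "is_path E p" "w = ghost_path p" then show ?thesis by (simp add: good_ghost)
next
  fix p q assume a: "is_path E p" "is_path E q" "rng E (last p) = rng E (last q)"
    "last p \<noteq> last q \<or> \<not> special E sp (last p)" "w = map Real p @ ghost_path q"
  have "p \<noteq> []" "q \<noteq> []" using a by (auto simp: is_path_def)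
  show ?thesis unfolding a(5)
  proof (rule good_append)
    show "good E sp (map Real p)" using a by (simp add: good_real)
    show "good E sp (ghost_path q)" using a by (simp add: good_ghost)
    show "okpair E sp (last (map Real p)) (hd (ghost_path q))"
      using a \<open>p \<noteq> []\<close> \<open>q \<noteq> []\<close> by (auto simp: hd_ghost_path last_map okpair_def)
  qed
qed

lemma good_basis: "good E sp w \<Longrightarrow> basis_path E sp w"
proof (induction w)
  case Nil then show ?case by simp
next
  case (Cons a w)
  show ?case
  proof (cases "w = []")
    case True
    show ?thesis
    proof (cases a)
      case (Real e)
      then show ?thesis using Cons.prems True unfolding basis_path_def
        by (intro disjI1 exI[of _ "[e]"]) (auto simp: is_path_def)
    next
      case (Ghost e)
      then show ?thesis using Cons.prems True unfolding basis_path_def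
        by (intro disjI2 disjI1 exI[of _ "[e]"]) (auto simp: is_path_def ghost_path_def)
    qed
  next
    case False
    have ga: "a \<in> edges (double_graph E)" "okpair E sp a (hd w)" "good E sp w"
      using Cons.prems False good_Cons by auto
    have "basis_path E sp w" using Cons.IH ga by simp
    then show ?thesis
    proof (elim basis_cases)
      fix p assume p: "is_path E p" "w = map Real p"
      then have pne: "p \<noteq> []" using False by auto
      show ?thesis
      proof (cases a)
        case (Real e)
        then have "is_path E (e # p)" using p pne ga by (auto simp: is_path_Cons okpair_def hd_map)
        then show ?thesis using Real p unfolding basis_path_def by (intro disjI1 exI[of _ "e # p"]) simp
      next
        case (Ghost e)
        then show ?thesis using ga p pne by (auto simp: okpair_def hd_map)
      qed
    next
      fix q assume q: "is_path E q" "w = ghost_path q"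
      then have qne: "q \<noteq> []" using False by (auto simp: ghost_path_def)
      show ?thesis
      proof (cases a)
        case (Real e)
        have "is_path E [e]" using ga Real by (simp add: is_path_def)
        moreover have "rng E (last [e]) = rng E (last q)"
          using ga Real q qne by (simp add: okpair_def hd_ghost_path)
        moreover have "last [e] \<noteq> last q \<or> \<not> special E sp (last [e])"
          using ga Real q qne by (auto simp: okpair_def hd_ghost_path)
        ultimately show ?thesis using q Real unfolding basis_path_def
          by (intro disjI2 disjI2 exI[of _ "[e]"] exI[of _ q]) simp
      next
        case (Ghost e)
        have "is_path E (q @ [e])" using ga Ghost q qne
          by (auto simp: is_path_snoc okpair_def hd_ghost_path)
        then show ?thesis using q Ghost unfolding basis_path_def
          by (intro disjI2 disjI1 exI[of _ "q @ [e]"]) (simp add: ghost_path_snoc)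
      qed
    next
      fix p q assume a: "is_path E p" "is_path E q" "rng E (last p) = rng E (last q)"
        "last p \<noteq> last q \<or> \<not> special E sp (last p)" "w = map Real p @ ghost_path q"
      have pne: "p \<noteq> []" using a by (auto simp: is_path_def)
      show ?thesis
      proof (cases a)
        case (Real e)
        have "is_path E (e # p)" using ga Real a pne by (auto simp: is_path_Cons okpair_def hd_map)
        then show ?thesis using a Real pne unfolding basis_path_def
          by (intro disjI2 disjI2 exI[of _ "e # p"] exI[of _ q]) simp
      next
        case (Ghost e)
        then show ?thesis using ga a pne by (auto simp: okpair_def hd_map)
      qed
    qed
  qed
qed

lemma basis_iff_good: "basis_path E sp w \<longleftrightarrow> good E sp w"
  using basis_good good_basis by blast




lemma rep_iso_sym:
  assumes bv: "bij_betw bv (verts H) (verts F)" and be: "bij_betw be (edges H) (edges F)"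
    and wfH: "\<forall>f\<in>edges H. src H f \<in> verts H \<and> rng H f \<in> verts H"
    and comp: "\<forall>f\<in>edges H. src F (be f) = bv (src H f) \<and> rng F (be f) = bv (rng H f)"
    and lv: "\<forall>w\<in>verts H. \<phi>v (bv w) = \<psi>v w" and le: "\<forall>f\<in>edges H. \<phi>e (be f) = \<psi>e f"
  shows "rep_iso F \<phi>v \<phi>e H \<psi>v \<psi>e"
  unfolding rep_iso_def
proof (intro exI conjI ballI)
  let ?av = "inv_into (verts H) bv" and ?ae = "inv_into (edges H) be"
  show "bij_betw ?av (verts F) (verts H)" using bv by (rule bij_betw_inv_into)
  show "bij_betw ?ae (edges F) (edges H)" using be by (rule bij_betw_inv_into)
  fix f assume f: "f \<in> edges F"
  have g: "?ae f \<in> edges H" "be (?ae f) = f"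
    using f be by (auto simp: bij_betw_def inv_into_into f_inv_into_f)
  have ibv: "inj_on bv (verts H)" using bv by (simp add: bij_betw_def)
  show "src H (?ae f) = ?av (src F f)"
    using comp g wfH ibv by (metis inv_into_f_f)
  show "rng H (?ae f) = ?av (rng F f)"
    using comp g wfH ibv by (metis inv_into_f_f)
  show "\<psi>e (?ae f) = \<phi>e f" using le g by metis
next
  fix w assume w: "w \<in> verts F"
  have "inv_into (verts H) bv w \<in> verts H" "bv (inv_into (verts H) bv w) = w"
    using w bv by (auto simp: bij_betw_def inv_into_into f_inv_into_f)
  then show "\<psi>v (inv_into (verts H) bv w) = \<phi>v w" using lv by metis
qed



locale erg =
  fixes E :: "('v,'e) dgraph" and sp :: "'v \<Rightarrow> 'e"
    and F :: "('a,'b) dgraph" and \<phi>v :: "'a \<Rightarrow> 'v" and \<phi>e :: "'b \<Rightarrow> 'e dedge"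
  assumes erg: "ext_rep_graph E sp F \<phi>v \<phi>e"
    and nosrc: "\<forall>w\<in>verts F. \<not> is_source F w"
    and acyc: "acyclic_graph F"
    and conn: "connected_graph F"
    and ne: "verts F \<noteq> {}"
begin

lemma wfF: "wf_graph F" using erg unfolding ext_rep_graph_def by (elim conjE)
lemma hom: "graph_hom F (double_graph E) \<phi>v \<phi>e" using erg unfolding ext_rep_graph_def by (elim conjE)

lemma src_in: "f \<in> edges F \<Longrightarrow> src F f \<in> verts F" using wfF by (simp add: wf_graph_def)
lemma rng_in: "f \<in> edges F \<Longrightarrow> rng F f \<in> verts F" using wfF by (simp add: wf_graph_def)

lemma at_w: "w \<in> verts F \<Longrightarrow>
        (is_source F w \<or> (\<exists>!f. f \<in> edges F \<and> rng F f = w)) \<and>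
        (let out = {f\<in>edges F. src F f = w};
             dout = {d\<in>edges (double_graph E). src (double_graph E) d = \<phi>v w} in
         (if is_source F w then bij_betw \<phi>e out dout
          else (case \<phi>e (in_edge F w) of
                  Real e \<Rightarrow> (if special E sp e then bij_betw \<phi>e out (dout - {Ghost e})
                             else bij_betw \<phi>e out dout)
                | Ghost e \<Rightarrow> bij_betw \<phi>e out {d\<in>dout. is_ghost d})))"
  using erg unfolding ext_rep_graph_def by (elim conjE) (erule bspec)

lemma uniq_in: "w \<in> verts F \<Longrightarrow> \<exists>!f. f \<in> edges F \<and> rng F f = w"
proof -
  assume w: "w \<in> verts F"
  have "is_source F w \<or> (\<exists>!f. f \<in> edges F \<and> rng F f = w)" using conjunct1[OF at_w[OF w]] .
  then show ?thesis using nosrc w by blast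
qed

lemma in_edge: "w \<in> verts F \<Longrightarrow> in_edge F w \<in> edges F \<and> rng F (in_edge F w) = w"
proof -
  assume w: "w \<in> verts F"
  have "(THE f. f \<in> edges F \<and> rng F f = w) \<in> edges F \<and> rng F (THE f. f \<in> edges F \<and> rng F f = w) = w"
    by (rule theI'[OF uniq_in[OF w]])
  then show ?thesis unfolding in_edge_def .
qed

lemma in_edge_rng: "f \<in> edges F \<Longrightarrow> in_edge F (rng F f) = f"
proof -
  assume f: "f \<in> edges F"
  show ?thesis unfolding in_edge_def
    by (rule the1_equality[OF uniq_in[OF rng_in[OF f]]]) (simp add: f)
qed

definition T where "T w = (let dout = {d\<in>edges (double_graph E). src (double_graph E) d = \<phi>v w} in
   case \<phi>e (in_edge F w) of Real e \<Rightarrow> if special E sp e then dout - {Ghost e} else dout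
     | Ghost e \<Rightarrow> {d\<in>dout. is_ghost d})"

lemma bij_out: "w \<in> verts F \<Longrightarrow> bij_betw \<phi>e {f\<in>edges F. src F f = w} (T w)"
proof -
  assume w: "w \<in> verts F"
  have "\<not> is_source F w" using w nosrc by blast
  then show ?thesis using conjunct2[OF at_w[OF w]] unfolding T_def Let_def
    by (cases "\<phi>e (in_edge F w)") auto
qed

lemma rng_in_label: "w \<in> verts F \<Longrightarrow> rng (double_graph E) (\<phi>e (in_edge F w)) = \<phi>v w"
  using hom in_edge[of w] unfolding graph_hom_def by auto

lemma out_ok: "w \<in> verts F \<Longrightarrow> g \<in> edges F \<Longrightarrow> src F g = w \<Longrightarrow>
   \<phi>e g \<in> edges (double_graph E) \<and> okpair E sp (\<phi>e (in_edge F w)) (\<phi>e g)"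
proof -
  assume w: "w \<in> verts F" and g: "g \<in> edges F" "src F g = w"
  have "\<phi>e g \<in> T w" using bij_out[OF w] g by (auto simp: bij_betw_def)
  then show ?thesis using rng_in_label[OF w] unfolding T_def Let_def okpair_def
    by (cases "\<phi>e (in_edge F w)") (auto split: if_splits)
qed

lemma out_ex: "w \<in> verts F \<Longrightarrow> l \<in> edges (double_graph E) \<Longrightarrow> okpair E sp (\<phi>e (in_edge F w)) l \<Longrightarrow>
   \<exists>g\<in>edges F. src F g = w \<and> \<phi>e g = l"
proof -
  assume w: "w \<in> verts F" and l: "l \<in> edges (double_graph E)" "okpair E sp (\<phi>e (in_edge F w)) l"
  have "l \<in> T w" using rng_in_label[OF w] l unfolding T_def Let_def okpair_def
    by (cases "\<phi>e (in_edge F w)") auto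
  then show ?thesis using bij_out[OF w] by (force simp: bij_betw_def)
qed

lemma out_inj: "w \<in> verts F \<Longrightarrow> g1 \<in> edges F \<Longrightarrow> g2 \<in> edges F \<Longrightarrow> src F g1 = w \<Longrightarrow> src F g2 = w
  \<Longrightarrow> \<phi>e g1 = \<phi>e g2 \<Longrightarrow> g1 = g2"
  using bij_out unfolding bij_betw_def inj_on_def by blast

definition par where "par w = src F (in_edge F w)"

lemma par_in: "w \<in> verts F \<Longrightarrow> par w \<in> verts F"
  using in_edge src_in par_def by auto

lemma funpow_par_in: "w \<in> verts F \<Longrightarrow> (par ^^ k) w \<in> verts F"
  by (induction k) (auto simp: par_in)

lemma par_edge: "w \<in> verts F \<Longrightarrow> (par w, w) \<in> edge_rel F"
  unfolding edge_rel_def par_def using in_edge by force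

lemma par_trancl: "w \<in> verts F \<Longrightarrow> ((par ^^ Suc k) w, w) \<in> (edge_rel F)\<^sup>+"
proof (induction k)
  case 0 then show ?case using par_edge by auto
next
  case (Suc k)
  have "(par ((par ^^ Suc k) w), (par ^^ Suc k) w) \<in> edge_rel F"
    using par_edge funpow_par_in Suc.prems by blast
  then show ?case using Suc by (simp del: funpow.simps add: funpow.simps(2)[of "Suc k"] )
qed

lemma par_noncyc: "w \<in> verts F \<Longrightarrow> k \<ge> 1 \<Longrightarrow> (par ^^ k) w \<noteq> w"
proof
  assume w: "w \<in> verts F" and k: "k \<ge> 1" and eq: "(par ^^ k) w = w"
  obtain j where "k = Suc j" using k by (cases k) auto
  then have "(w, w) \<in> (edge_rel F)\<^sup>+" using par_trancl[OF w, of j] eq by simp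
  then show False using acyc by (simp add: acyclic_graph_def acyclic_def)
qed

definition w0 where "w0 = (SOME v. v \<in> verts F)"
definition bb where "bb n = (par ^^ n) w0"
definition xx where "xx i = \<phi>e (in_edge F (bb (i - 1)))"

lemma w0_in: "w0 \<in> verts F" using ne unfolding w0_def by (simp add: some_in_eq)
lemma bb_in: "bb n \<in> verts F" using w0_in funpow_par_in bb_def by simp
lemma bb_Suc: "bb (Suc n) = par (bb n)" by (simp add: bb_def)
lemma bb_add: "(par ^^ k) (bb n) = bb (n + k)"
  by (simp add: bb_def funpow_add add.commute)

lemma bb_inj: "bb m = bb n \<Longrightarrow> m = n"
proof (rule ccontr)
  assume eq: "bb m = bb n" and ne: "m \<noteq> n"
  show False
  proof (cases "m < n")
    case True
    have "(par ^^ (n - m)) (bb m) = bb m" using bb_add[of "n - m" m] True eq by simp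
    then show False using par_noncyc[OF bb_in, of "n - m" m] True by simp
  next
    case False
    then have "n < m" using ne by simp
    have "(par ^^ (m - n)) (bb n) = bb n" using bb_add[of "m - n" n] \<open>n < m\<close> eq by simp
    then show False using par_noncyc[OF bb_in, of "m - n" n] \<open>n < m\<close> by simp
  qed
qed

end



context erg begin

definition oe where "oe w l = (SOME g. g \<in> edges F \<and> src F g = w \<and> \<phi>e g = l)"

primrec walk where
  "walk w [] = w"
| "walk w (l # ls) = walk (rng F (oe w l)) ls"

lemma walk_snoc: "walk w (ys @ [a]) = rng F (oe (walk w ys) a)"
  by (induction ys arbitrary: w) auto

lemma oe_prop: "w \<in> verts F \<Longrightarrow> l \<in> edges (double_graph E) \<Longrightarrow> okpair E sp (\<phi>e (in_edge F w)) l \<Longrightarrow>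
   oe w l \<in> edges F \<and> src F (oe w l) = w \<and> \<phi>e (oe w l) = l"
  unfolding oe_def by (rule someI_ex) (use out_ex in blast)

lemma walk_props: "v \<in> verts F \<Longrightarrow> good E sp (\<phi>e (in_edge F v) # ys) \<Longrightarrow>
   walk v ys \<in> verts F \<and> (ys \<noteq> [] \<longrightarrow> \<phi>e (in_edge F (walk v ys)) = last ys \<and> par (walk v ys) = walk v (butlast ys))"
proof (induction ys rule: rev_induct)
  case Nil then show ?case by simp
next
  case (snoc a ys)
  let ?c = "\<phi>e (in_edge F v)"
  have g: "good E sp (?c # ys)" "a \<in> edges (double_graph E)" "okpair E sp (last (?c # ys)) a"
    using good_snoc[of "?c # ys" E sp a] snoc.prems by auto
  let ?u = "walk v ys"
  have u: "?u \<in> verts F" using snoc g by blast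
  have lab: "\<phi>e (in_edge F ?u) = last (?c # ys)"
    using snoc g by (cases "ys = []") auto
  have o: "oe ?u a \<in> edges F \<and> src F (oe ?u a) = ?u \<and> \<phi>e (oe ?u a) = a"
    using oe_prop[OF u g(2)] g(3) lab by simp
  have ie: "in_edge F (rng F (oe ?u a)) = oe ?u a" using o in_edge_rng by blast
  show ?case using o ie rng_in[of "oe ?u a"]
    by (simp add: walk_snoc par_def)
qed

primrec labs where
  "labs 0 u = []"
| "labs (Suc k) u = labs k (par u) @ [\<phi>e (in_edge F u)]"

lemma length_labs: "length (labs k u) = k"
  by (induction k arbitrary: u) auto

lemma funpow_par_Suc: "(par ^^ Suc k) u = (par ^^ k) (par u)"
  by (simp only: funpow_Suc_right o_apply)

lemma hd_labs: "k \<ge> 1 \<Longrightarrow> hd (labs k u) = \<phi>e (in_edge F ((par ^^ (k - 1)) u))"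
proof (induction k arbitrary: u)
  case 0 then show ?case by simp
next
  case (Suc k)
  show ?case
  proof (cases "k = 0")
    case True then show ?thesis by simp
  next
    case False
    then have "labs k (par u) \<noteq> []" using length_labs[of k "par u"] by auto
    then have "hd (labs (Suc k) u) = hd (labs k (par u))" by simp
    also have "\<dots> = \<phi>e (in_edge F ((par ^^ (k - 1)) (par u)))" using Suc False by simp
    also have "(par ^^ (k - 1)) (par u) = (par ^^ (Suc k - 1)) u"
      using False funpow_par_Suc[of "k - 1" u] by simp
    finally show ?thesis .
  qed
qed

lemma oe_in_edge: "u \<in> verts F \<Longrightarrow> oe (par u) (\<phi>e (in_edge F u)) = in_edge F u"
proof -
  assume u: "u \<in> verts F"
  have ie: "in_edge F u \<in> edges F" "rng F (in_edge F u) = u" using in_edge[OF u] by auto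
  have ok: "\<phi>e (in_edge F u) \<in> edges (double_graph E) \<and> okpair E sp (\<phi>e (in_edge F (par u))) (\<phi>e (in_edge F u))"
    using out_ok[OF par_in[OF u] ie(1)] by (simp add: par_def)
  have o: "oe (par u) (\<phi>e (in_edge F u)) \<in> edges F \<and> src F (oe (par u) (\<phi>e (in_edge F u))) = par u
     \<and> \<phi>e (oe (par u) (\<phi>e (in_edge F u))) = \<phi>e (in_edge F u)"
    using oe_prop[OF par_in[OF u]] ok by blast
  show ?thesis using out_inj[OF par_in[OF u]] o ie by (simp add: par_def)
qed

lemma last_labs: "last (\<phi>e (in_edge F ((par ^^ k) u)) # labs k u) = \<phi>e (in_edge F u)"
  by (cases k) auto

lemma walk_labs: "u \<in> verts F \<Longrightarrow> walk ((par ^^ k) u) (labs k u) = u \<and>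
    good E sp (\<phi>e (in_edge F ((par ^^ k) u)) # labs k u)"
proof (induction k arbitrary: u)
  case 0
  have "in_edge F u \<in> edges F" "rng F (in_edge F u) = u" using in_edge[OF 0] by auto
  then have "\<phi>e (in_edge F u) \<in> edges (double_graph E)"
    using out_ok[OF par_in[OF 0]] by (simp add: par_def)
  then show ?case by simp
next
  case (Suc k)
  have pu: "par u \<in> verts F" using par_in Suc.prems by blast
  have IH: "walk ((par ^^ k) (par u)) (labs k (par u)) = par u"
    "good E sp (\<phi>e (in_edge F ((par ^^ k) (par u))) # labs k (par u))" using Suc.IH[OF pu] by auto
  have ie: "in_edge F u \<in> edges F" "rng F (in_edge F u) = u" using in_edge[OF Suc.prems] by auto
  have ok: "\<phi>e (in_edge F u) \<in> edges (double_graph E) \<and> okpair E sp (\<phi>e (in_edge F (par u))) (\<phi>e (in_edge F u))"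
    using out_ok[OF pu ie(1)] by (simp add: par_def)
  have w: "walk ((par ^^ Suc k) u) (labs (Suc k) u) = u"
    unfolding funpow_par_Suc labs.simps walk_snoc IH(1) oe_in_edge[OF Suc.prems] using ie by simp
  have "good E sp ((\<phi>e (in_edge F ((par ^^ k) (par u))) # labs k (par u)) @ [\<phi>e (in_edge F u)])"
    using good_snoc[of "\<phi>e (in_edge F ((par ^^ k) (par u))) # labs k (par u)" E sp "\<phi>e (in_edge F u)"]
      IH(2) ok last_labs[of k "par u"] by simp
  then show ?case using w unfolding funpow_par_Suc by simp
qed

lemma labs_walk: "v \<in> verts F \<Longrightarrow> good E sp (\<phi>e (in_edge F v) # ys) \<Longrightarrow>
   labs (length ys) (walk v ys) = ys \<and> (par ^^ length ys) (walk v ys) = v"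
proof (induction ys rule: rev_induct)
  case Nil then show ?case by simp
next
  case (snoc a ys)
  let ?c = "\<phi>e (in_edge F v)"
  have g: "good E sp (?c # ys)"
    using good_snoc[of "?c # ys" E sp a] snoc.prems by auto
  have wp: "\<phi>e (in_edge F (walk v (ys @ [a]))) = a" "par (walk v (ys @ [a])) = walk v ys"
    using walk_props[OF snoc.prems] by auto
  show ?case using snoc.IH[OF snoc.prems(1) g] wp
    by (simp del: funpow.simps add: funpow_par_Suc)
qed

lemma walk_inj: "v \<in> verts F \<Longrightarrow> good E sp (\<phi>e (in_edge F v) # ys) \<Longrightarrow> good E sp (\<phi>e (in_edge F v) # zs) \<Longrightarrow>
   length ys = length zs \<Longrightarrow> walk v ys = walk v zs \<Longrightarrow> ys = zs"
  using labs_walk by metis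

end



lemma Fx_verts[simp]:
  "W i \<in> verts (Fx E sp x) \<longleftrightarrow> i \<ge> 1"
  "WY i y \<in> verts (Fx E sp x) \<longleftrightarrow> i \<ge> 1 \<and> y \<in> Xi E sp x i"
  by (auto simp: Fx_def)

lemma Fx_edges[simp]:
  "FE i \<in> edges (Fx E sp x) \<longleftrightarrow> i \<ge> 1"
  "FEY i y \<in> edges (Fx E sp x) \<longleftrightarrow> i \<ge> 1 \<and> y \<in> Xi E sp x i"
  by (auto simp: Fx_def)

lemma Fx_src_rng[simp]:
  "src (Fx E sp x) (FE i) = W (Suc i)"
  "src (Fx E sp x) (FEY i y) = (if length y = 1 then W i else WY i (butlast y))"
  "rng (Fx E sp x) (FE i) = W i"
  "rng (Fx E sp x) (FEY i y) = WY i y"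
  by (auto simp: Fx_def)

lemma good_Cons_iff: "y \<noteq> [] \<Longrightarrow> good E sp (a # y) \<longleftrightarrow> good E sp [a, hd y] \<and> good E sp y"
  using good_Cons[of y E sp a] good_hd[of E sp y] by auto

lemma Xi_iff: "y \<in> Xi E sp x i \<longleftrightarrow> y \<noteq> [] \<and> good E sp (x i # y) \<and> (i \<ge> 2 \<longrightarrow> hd y \<noteq> x (i - 1))"
  unfolding Xi_def basis_iff_good using good_Cons_iff by auto

context erg begin

abbreviation "FX \<equiv> Fx E sp xx"

definition bv where "bv w = (case w of W i \<Rightarrow> bb (i - 1) | WY i y \<Rightarrow> walk (bb (i - 1)) y)"
definition be where "be f = in_edge F (bv (rng FX f))"

lemma out_ok_in: "u \<in> verts F \<Longrightarrow> \<phi>e (in_edge F u) \<in> edges (double_graph E) \<and>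
   okpair E sp (\<phi>e (in_edge F (par u))) (\<phi>e (in_edge F u))"
  using out_ok[OF par_in in_edge[THEN conjunct1]] by (simp add: par_def)

lemma xx_bb: "xx (Suc n) = \<phi>e (in_edge F (bb n))" by (simp add: xx_def)

lemma xx_Xinf: "xx \<in> Xinf E sp"
proof -
  have "good E sp (rev (map xx [1..<Suc (Suc n)]))" for n
  proof (induction n)
    case 0 then show ?case using out_ok_in[OF bb_in, of 0] by (simp add: xx_bb)
  next
    case (Suc n)
    have r: "rev (map xx [1..<Suc (Suc (Suc n))]) = xx (Suc (Suc n)) # rev (map xx [1..<Suc (Suc n)])"
      by simp
    have h: "hd (rev (map xx [1..<Suc (Suc n)])) = xx (Suc n)" by (simp add: hd_rev)
    have "xx (Suc (Suc n)) \<in> edges (double_graph E)" using out_ok_in[OF bb_in, of "Suc n"] by (simp add: xx_bb)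
    moreover have "okpair E sp (xx (Suc (Suc n))) (xx (Suc n))"
      using out_ok_in[OF bb_in, of n] by (simp add: xx_bb bb_Suc)
    ultimately show ?case unfolding r using good_Cons[of "rev (map xx [1..<Suc (Suc n)])" E sp] h Suc
      by simp
  qed
  then show ?thesis unfolding Xinf_def basis_iff_good
  proof (intro CollectI allI impI)
    fix n :: nat assume "n \<ge> 1"
    then obtain n' where "n = Suc n'" by (cases n) auto
    then show "good E sp (rev (map xx [1..<Suc n]))" using \<open>\<And>n. good E sp (rev (map xx [1..<Suc (Suc n)]))\<close> by simp
  qed
qed

lemma Xi_good: "y \<in> Xi E sp xx i \<Longrightarrow> i \<ge> 1 \<Longrightarrow> good E sp (\<phi>e (in_edge F (bb (i - 1))) # y)"
  using Xi_iff[of y E sp xx i] by (simp add: xx_def)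

lemma walk_in: "y \<in> Xi E sp xx i \<Longrightarrow> i \<ge> 1 \<Longrightarrow> walk (bb (i - 1)) y \<in> verts F"
  using walk_props[OF bb_in Xi_good] by blast

lemma bv_in: "w \<in> verts FX \<Longrightarrow> bv w \<in> verts F"
proof (cases w)
  case (W i) then show ?thesis by (simp add: bv_def bb_in)
next
  case (WY i y)
  assume w: "w \<in> verts FX"
  then have "i \<ge> 1" "y \<in> Xi E sp xx i" using WY by auto
  then show ?thesis using walk_in[of y i] WY by (simp add: bv_def)
qed

lemma funpow_split: "k \<le> n \<Longrightarrow> (par ^^ n) u = (par ^^ (n - k)) ((par ^^ k) u)"
proof -
  assume "k \<le> n"
  then have "n = (n - k) + k" by simp
  then have "(par ^^ n) u = (par ^^ ((n - k) + k)) u" by simp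
  also have "\<dots> = (par ^^ (n - k)) ((par ^^ k) u)" by (simp only: funpow_add o_apply)
  finally show ?thesis .
qed

lemma anc_bb:
  assumes i: "i \<ge> 1" and y: "y \<in> Xi E sp xx i" and k: "(par ^^ k) (walk (bb (i - 1)) y) = bb m"
  shows "k \<ge> length y"
proof (rule ccontr)
  assume "\<not> k \<ge> length y"
  then have kl: "k < length y" by simp
  let ?u = "walk (bb (i - 1)) y" and ?n = "length y"
  have g: "good E sp (\<phi>e (in_edge F (bb (i - 1))) # y)" using Xi_good[OF y i] .
  have lw: "labs ?n ?u = y" "(par ^^ ?n) ?u = bb (i - 1)" using labs_walk[OF bb_in g] by auto
  have "(par ^^ ?n) ?u = (par ^^ (?n - k)) ((par ^^ k) ?u)"
    using kl by (intro funpow_split) simp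
  also have "\<dots> = bb (m + (?n - k))" using k bb_add by simp
  finally have "bb (i - 1) = bb (m + (?n - k))" using lw(2) by simp
  then have "i - 1 = m + (?n - k)" by (rule bb_inj)
  then have i2: "i \<ge> 2" and im: "i - 2 = m + (?n - 1 - k)" using kl i by auto
  have "(par ^^ (?n - 1)) ?u = (par ^^ (?n - 1 - k)) ((par ^^ k) ?u)"
    using kl by (intro funpow_split) simp
  also have "\<dots> = bb (i - 2)" using k bb_add im by simp
  finally have "hd y = \<phi>e (in_edge F (bb (i - 2)))"
    using hd_labs[of ?n ?u] lw kl by simp
  moreover have "xx (i - 1) = \<phi>e (in_edge F (bb (i - 2)))" using i2 by (simp add: xx_def numeral_2_eq_2)
  ultimately show False using y i2 Xi_iff[of y E sp xx i] by auto
qed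

lemma bv_inj: "inj_on bv (verts FX)"
proof (rule inj_onI)
  fix a b assume a: "a \<in> verts FX" and b: "b \<in> verts FX" and eq: "bv a = bv b"
  show "a = b"
  proof (cases a)
    case (W i)
    show ?thesis
    proof (cases b)
      case (W j)
      then show ?thesis using \<open>a = W i\<close> a b eq bb_inj[of "i - 1" "j - 1"] by (auto simp: bv_def)
    next
      case (WY j z)
      have "(par ^^ 0) (walk (bb (j - 1)) z) = bb (i - 1)" using eq \<open>a = W i\<close> WY by (simp add: bv_def)
      then have "0 \<ge> length z" using anc_bb[of j z 0] b WY by auto
      then show ?thesis using b WY Xi_iff[of z E sp xx j] by auto
    qed
  next
    case (WY i y)
    show ?thesis
    proof (cases b)
      case (W j)
      have "(par ^^ 0) (walk (bb (i - 1)) y) = bb (j - 1)" using eq \<open>a = WY i y\<close> W by (simp add: bv_def)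
      then have "0 \<ge> length y" using anc_bb[of i y 0] a WY by auto
      then show ?thesis using a WY Xi_iff[of y E sp xx i] by auto
    next
      case (WY j z)
      let ?u = "walk (bb (i - 1)) y"
      have u2: "walk (bb (j - 1)) z = ?u" using eq \<open>a = WY i y\<close> WY by (simp add: bv_def)
      have i: "i \<ge> 1" "y \<in> Xi E sp xx i" using a \<open>a = WY i y\<close> by auto
      have j: "j \<ge> 1" "z \<in> Xi E sp xx j" using b WY by auto
      have ly: "labs (length y) ?u = y" "(par ^^ length y) ?u = bb (i - 1)"
        using labs_walk[OF bb_in Xi_good[OF i(2) i(1)]] by auto
      have lz: "labs (length z) ?u = z" "(par ^^ length z) ?u = bb (j - 1)"
        using labs_walk[OF bb_in Xi_good[OF j(2) j(1)]] u2 by auto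
      have "length z \<ge> length y" using anc_bb[OF i] lz(2) by blast
      moreover have "length y \<ge> length z" using anc_bb[OF j] ly(2) u2 by metis
      ultimately have "length y = length z" by simp
      then have "y = z" "bb (i - 1) = bb (j - 1)" using ly lz by auto
      then have "i = j" using bb_inj i j by fastforce
      then show ?thesis using \<open>a = WY i y\<close> WY \<open>y = z\<close> by simp
    qed
  qed
qed

lemma conn_bb: "u \<in> verts F \<Longrightarrow> \<exists>k m. (par ^^ k) u = bb m"
proof -
  assume u: "u \<in> verts F"
  have "(w0, u) \<in> (edge_rel F \<union> (edge_rel F)\<inverse>)\<^sup>*" using conn w0_in u by (simp add: connected_graph_def)
  then show ?thesis
  proof (induction rule: rtrancl_induct)
    case base
    have "(par ^^ 0) w0 = bb 0" by (simp add: bb_def)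
    then show ?case by blast
  next
    case (step y z)
    then obtain k m where km: "(par ^^ k) y = bb m" by blast
    from step(2) show ?case
    proof
      assume "(y, z) \<in> edge_rel F"
      then obtain f where f: "f \<in> edges F" "y = src F f" "z = rng F f" by (auto simp: edge_rel_def)
      have "par z = y" using f in_edge_rng by (simp add: par_def)
      then have "(par ^^ Suc k) z = bb m" using km by (simp only: funpow_par_Suc)
      then show ?thesis by blast
    next
      assume "(y, z) \<in> (edge_rel F)\<inverse>"
      then obtain f where f: "f \<in> edges F" "z = src F f" "y = rng F f" by (auto simp: edge_rel_def)
      have pz: "par y = z" using f in_edge_rng by (simp add: par_def)
      show ?thesis
      proof (cases k)
        case 0
        then have "(par ^^ 0) z = bb (Suc m)" using km pz bb_Suc by simp
        then show ?thesis by blast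
      next
        case (Suc k')
        then have "(par ^^ k') z = bb m" using km pz by (simp only: funpow_par_Suc)
        then show ?thesis by blast
      qed
    qed
  qed
qed

lemma bv_surj: "u \<in> verts F \<Longrightarrow> \<exists>w\<in>verts FX. bv w = u"
proof -
  assume u: "u \<in> verts F"
  have ex: "\<exists>k. \<exists>m. (par ^^ k) u = bb m" using conn_bb[OF u] by blast
  define k where "k = (LEAST k. \<exists>m. (par ^^ k) u = bb m)"
  have k: "\<exists>m. (par ^^ k) u = bb m" unfolding k_def by (rule LeastI_ex[OF ex])
  have kmin: "\<forall>k'<k. \<not> (\<exists>m. (par ^^ k') u = bb m)"
    unfolding k_def using not_less_Least by blast
  obtain m where m: "(par ^^ k) u = bb m" using k by blast
  show ?thesis
  proof (cases k)
    case 0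
    then have "bv (W (Suc m)) = u" using m by (simp add: bv_def)
    then show ?thesis by (intro bexI[of _ "W (Suc m)"]) auto
  next
    case (Suc k')
    let ?y = "labs k u"
    have wl: "walk (bb m) ?y = u" "good E sp (\<phi>e (in_edge F (bb m)) # ?y)"
      using walk_labs[OF u, of k] unfolding m by auto
    have yne: "?y \<noteq> []" using length_labs[of k u] Suc by auto
    have hdy: "hd ?y = \<phi>e (in_edge F ((par ^^ k') u))" using hd_labs[of k u] Suc by simp
    have "hd ?y \<noteq> xx m" if m1: "m \<ge> 1"
    proof
      assume eq: "hd ?y = xx m"
      have v1: "(par ^^ k') u \<in> verts F" using funpow_par_in[OF u] .
      have v2: "bb (m - 1) \<in> verts F" using bb_in .
      have "src F (in_edge F ((par ^^ k') u)) = (par ^^ Suc k') u" by (simp add: par_def)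
      then have s1: "src F (in_edge F ((par ^^ k') u)) = bb m"
        using m Suc by simp
      have "src F (in_edge F (bb (m - 1))) = bb (Suc (m - 1))" by (simp add: par_def bb_Suc)
      then have s2: "src F (in_edge F (bb (m - 1))) = bb m"
        using m1 by simp
      have e1: "\<phi>e (in_edge F ((par ^^ k') u)) = \<phi>e (in_edge F (bb (m - 1)))"
        using eq hdy by (simp add: xx_def)
      have "in_edge F ((par ^^ k') u) = in_edge F (bb (m - 1))"
        using out_inj[OF bb_in, of "in_edge F ((par ^^ k') u)" "in_edge F (bb (m - 1))" m]
          in_edge[OF v1] in_edge[OF v2] s1 s2 e1 by blast
      then have "rng F (in_edge F ((par ^^ k') u)) = rng F (in_edge F (bb (m - 1)))" by simp
      then have "(par ^^ k') u = bb (m - 1)" using in_edge[OF v1] in_edge[OF v2] by simp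
      then show False using kmin Suc by blast
    qed
    moreover have "good E sp (xx (Suc m) # ?y)" using wl(2) by (simp add: xx_bb)
    ultimately have "?y \<in> Xi E sp xx (Suc m)" using Xi_iff[of ?y E sp xx "Suc m"] yne by simp
    moreover have "bv (WY (Suc m) ?y) = u" using wl by (simp add: bv_def)
    ultimately show ?thesis by (intro bexI[of _ "WY (Suc m) ?y"]) auto
  qed
qed

lemma bv_bij: "bij_betw bv (verts FX) (verts F)"
  unfolding bij_betw_def using bv_inj bv_in bv_surj by blast

lemma FX_wf: "\<forall>f\<in>edges FX. src FX f \<in> verts FX \<and> rng FX f \<in> verts FX"
proof
  fix f assume f: "f \<in> edges FX"
  show "src FX f \<in> verts FX \<and> rng FX f \<in> verts FX"
  proof (cases f)
    case (FE i) then show ?thesis using f by auto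
  next
    case (FEY i y)
    have i: "i \<ge> 1" "y \<in> Xi E sp xx i" using f FEY by auto
    have "butlast y \<in> Xi E sp xx i" if l: "length y \<noteq> 1"
    proof -
      have yne: "y \<noteq> []" and g: "good E sp (xx i # y)" and h: "i \<ge> 2 \<longrightarrow> hd y \<noteq> xx (i - 1)"
        using i(2) Xi_iff[of y E sp xx i] by auto
      have bne: "butlast y \<noteq> []" using yne l by (cases y rule: rev_cases) auto
      have ysn: "y = butlast y @ [last y]" using yne by simp
      have "good E sp ((xx i # butlast y) @ [last y])" using g ysn by (metis append_Cons)
      then have "good E sp (xx i # butlast y)" using good_snoc by blast
      moreover have "hd (butlast y) = hd y" using bne ysn by (metis hd_append2)
      ultimately show ?thesis using Xi_iff[of "butlast y" E sp xx i] bne h by auto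
    qed
    then show ?thesis using FEY i by auto
  qed
qed

lemma in_FX: "w \<in> verts FX \<Longrightarrow> \<exists>f\<in>edges FX. rng FX f = w"
  by (cases w) (auto intro: bexI[of _ "FE _"] bexI[of _ "FEY _ _"])

lemma rng_FX_inj: "f1 \<in> edges FX \<Longrightarrow> f2 \<in> edges FX \<Longrightarrow> rng FX f1 = rng FX f2 \<Longrightarrow> f1 = f2"
  by (cases f1; cases f2) auto

lemma be_rng: "f \<in> edges FX \<Longrightarrow> be f \<in> edges F \<and> rng F (be f) = bv (rng FX f)"
  unfolding be_def using in_edge bv_in FX_wf by blast

lemma be_bij: "bij_betw be (edges FX) (edges F)"
  unfolding bij_betw_def
proof
  show "inj_on be (edges FX)"
  proof (rule inj_onI)
    fix f1 f2 assume f: "f1 \<in> edges FX" "f2 \<in> edges FX" and eq: "be f1 = be f2"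
    have "rng F (be f1) = rng F (be f2)" using eq by simp
    then have "bv (rng FX f1) = bv (rng FX f2)" using be_rng f by simp
    moreover have "rng FX f1 \<in> verts FX" "rng FX f2 \<in> verts FX" using FX_wf f by auto
    ultimately have "rng FX f1 = rng FX f2" using bv_inj inj_onD by fastforce
    then show "f1 = f2" using rng_FX_inj f by blast
  qed
  show "be ` edges FX = edges F"
  proof
    show "be ` edges FX \<subseteq> edges F" using be_rng by blast
    show "edges F \<subseteq> be ` edges FX"
    proof
      fix g assume g: "g \<in> edges F"
      obtain w where w: "w \<in> verts FX" "bv w = rng F g" using bv_surj[OF rng_in[OF g]] by blast
      obtain f where f: "f \<in> edges FX" "rng FX f = w" using in_FX[OF w(1)] by blast
      have "be f = g" unfolding be_def using f w in_edge_rng[OF g] by simp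
      then show "g \<in> be ` edges FX" using f by blast
    qed
  qed
qed

lemma be_comp: "\<forall>f\<in>edges FX. src F (be f) = bv (src FX f) \<and> rng F (be f) = bv (rng FX f)"
proof
  fix f assume f: "f \<in> edges FX"
  have "src F (be f) = par (bv (rng FX f))" by (simp add: be_def par_def)
  also have "\<dots> = bv (src FX f)"
  proof (cases f)
    case (FE i)
    then show ?thesis using f bb_Suc[of "i - 1"] by (simp add: bv_def)
  next
    case (FEY i y)
    have i: "i \<ge> 1" "y \<in> Xi E sp xx i" using f FEY by auto
    have yne: "y \<noteq> []" using i Xi_iff by blast
    have "par (walk (bb (i - 1)) y) = walk (bb (i - 1)) (butlast y)"
      using walk_props[OF bb_in Xi_good[OF i(2) i(1)]] yne by blast
    moreover have "length y = 1 \<Longrightarrow> butlast y = []" by (cases y) auto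
    ultimately show ?thesis using FEY by (auto simp: bv_def)
  qed
  finally show "src F (be f) = bv (src FX f) \<and> rng F (be f) = bv (rng FX f)" using be_rng f by blast
qed

lemma lab_v: "\<forall>w\<in>verts FX. \<phi>v (bv w) = phiVx E xx w"
proof
  fix w assume w: "w \<in> verts FX"
  show "\<phi>v (bv w) = phiVx E xx w"
  proof (cases w)
    case (W i) then show ?thesis using w rng_in_label[OF bb_in, of "i - 1"] by (simp add: bv_def phiVx_def xx_def)
  next
    case (WY i y)
    have i: "i \<ge> 1" "y \<in> Xi E sp xx i" using w WY by auto
    have yne: "y \<noteq> []" using i Xi_iff by blast
    have wp: "walk (bb (i - 1)) y \<in> verts F" "\<phi>e (in_edge F (walk (bb (i - 1)) y)) = last y"
      using walk_props[OF bb_in Xi_good[OF i(2) i(1)]] yne by auto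
    show ?thesis using rng_in_label[OF wp(1)] wp(2) WY by (simp add: bv_def phiVx_def)
  qed
qed

lemma lab_e: "\<forall>f\<in>edges FX. \<phi>e (be f) = phiEx xx f"
proof
  fix f assume f: "f \<in> edges FX"
  show "\<phi>e (be f) = phiEx xx f"
  proof (cases f)
    case (FE i) then show ?thesis using f by (simp add: be_def bv_def phiEx_def xx_def)
  next
    case (FEY i y)
    have i: "i \<ge> 1" "y \<in> Xi E sp xx i" using f FEY by auto
    have yne: "y \<noteq> []" using i Xi_iff by blast
    have "\<phi>e (in_edge F (walk (bb (i - 1)) y)) = last y"
      using walk_props[OF bb_in Xi_good[OF i(2) i(1)]] yne by auto
    then show ?thesis using FEY by (simp add: be_def bv_def phiEx_def)
  qed
qed

lemma main: "\<exists>x\<in>Xinf E sp. rep_iso F \<phi>v \<phi>e (Fx E sp x) (phiVx E x) (phiEx x)"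
  using xx_Xinf rep_iso_sym[OF bv_bij be_bij FX_wf be_comp lab_v lab_e] by blast

end

theorem proposition5p11:
  fixes E :: "('v,'e) dgraph" and sp :: "'v \<Rightarrow> 'e"
    and F :: "('a,'b) dgraph" and \<phi>v :: "'a \<Rightarrow> 'v" and \<phi>e :: "'b \<Rightarrow> 'e dedge"
  assumes "row_finite_graph E"
    and "special_choice E sp"
    and "ext_rep_graph E sp F \<phi>v \<phi>e"
    and "verts F \<noteq> {}"
    and "acyclic_graph F"
    and "connected_graph F"
    and "\<forall>w\<in>verts F. \<not> is_source F w"
  shows "\<exists>x\<in>Xinf E sp. rep_iso F \<phi>v \<phi>e (Fx E sp x) (phiVx E x) (phiEx x)"
proof -
  interpret erg E sp F \<phi>v \<phi>e
    by (rule erg.intro) (fact assms)+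
  show ?thesis by (rule main)
qed

end
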